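(* Let $\mathcal G$ be a core network with input nodes $\iota_1,\dots,\iota_n$ and output node $o$, and suppose $\mathcal K_j$ is a subnetwork of $\mathcal G$ such that (a) $\mathcal K_j$ is an $\mathcal A_{\mathcal G}$-path component, and (b) for every $m=1,\dots,n$ and every $\iota_mo$-simple path $S$, nodes in $\mathcal K_j$ are not $CS$-path equivalent to any node in $CS\setminus\mathcal K_j$. Then $\det(J_{\mathcal K_j})$ is an irreducible factor of $\det\langle H\rangle$.
   Context: Node $b$ is downstream from $a$ (and $a$ upstream from $b$) if there is a directed path from $a$ to $b$ (every node is up/downstream from itself). A core network: every node is upstream from $o$ and downstream from at least one input node. A simple path visits each node at most once; an $\iota_mo$-simple path is a simple path from $\iota_m$ to $o$. A node is $\iota_m$-simple if it lies on an $\iota_mo$-simple path, $\iota_m$-appendage if downstream from $\iota_m$ but not $\iota_m$-simple, absolutely appendage if $\iota_m$-appendage for all $m$. $\mathcal A_{\mathcal G}$: all absolutely appendage nodes with all arrows of $\mathcal G$ between them. For a subnetwork $\mathcal K$, nodes are $\mathcal K$-path equivalent if joined by paths within $\mathcal K$ in both directions; a $\mathcal K$-path component is an equivalence class. For an $\iota_mo$-simple path $S$, $CS$ is the subnetwork of nodes of $\mathcal G$ not on $S$ with all arrows between them. An admissible system has variables $x_j$ per node with $\dot x_{\iota_m}=f_{\iota_m}(X,\mathcal I)$, $\dot x_j=f_j(X)$ otherwise, $f_{j,x_\ell}\equiv0$ unless there is an arrow $\ell\to j$ (all nodes self-coupled), $f_{\iota_m,\mathcal I}\neq0$; these entries are treated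 as independent indeterminates, and irreducibility refers to the resulting polynomial ring. $J_{\mathcal K}=(f_{j,x_\ell})_{j,\ell\in\mathcal K}$. $\langle H\rangle$ is the Jacobian over all nodes (output last) with last column replaced by the column with $-f_{\iota_m,\mathcal I}$ in row $\iota_m$ and $0$ elsewhere. *)

theory Defs
  imports Complex_Main "HOL-Library.Poly_Mapping" "HOL-Library.Product_Lexorder" "HOL-Library.Option_ord"
          "HOL-Combinatorics.Permutations" "HOL-Computational_Algebra.Factorial_Ring"
begin

text \<open>A network: finite node set V, arrows E (pair (a,b) means arrow a -> b), E within V.\<close>

definition downstream :: "('n \<times> 'n) set \<Rightarrow> 'n \<Rightarrow> 'n \<Rightarrow> bool" where
  "downstream E a b \<longleftrightarrow> (a, b) \<in> E\<^sup>*"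

definition core_network :: "'n set \<Rightarrow> ('n \<times> 'n) set \<Rightarrow> 'n set \<Rightarrow> 'n \<Rightarrow> bool" where
  "core_network V E Inp out \<longleftrightarrow>
     finite V \<and> E \<subseteq> V \<times> V \<and> Inp \<subseteq> V \<and> Inp \<noteq> {} \<and> out \<in> V \<and> out \<notin> Inp \<and>
     (\<forall>v\<in>V. downstream E v out \<and> (\<exists>i\<in>Inp. downstream E i v))"

definition simple_path :: "('n \<times> 'n) set \<Rightarrow> 'n \<Rightarrow> 'n \<Rightarrow> 'n list \<Rightarrow> bool" where
  "simple_path E a b xs \<longleftrightarrow> xs \<noteq> [] \<and> hd xs = a \<and> last xs = b \<and> distinct xs \<and>
     (\<forall>k. Suc k < length xs \<longrightarrow> (xs ! k, xs ! Suc k) \<in> E)"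

definition simple_node :: "('n \<times> 'n) set \<Rightarrow> 'n \<Rightarrow> 'n \<Rightarrow> 'n \<Rightarrow> bool" where
  "simple_node E i out v \<longleftrightarrow> (\<exists>S. simple_path E i out S \<and> v \<in> set S)"

definition appendage_node :: "('n \<times> 'n) set \<Rightarrow> 'n \<Rightarrow> 'n \<Rightarrow> 'n \<Rightarrow> bool" where
  "appendage_node E i out v \<longleftrightarrow> downstream E i v \<and> \<not> simple_node E i out v"

definition abs_appendage_nodes :: "'n set \<Rightarrow> ('n \<times> 'n) set \<Rightarrow> 'n set \<Rightarrow> 'n \<Rightarrow> 'n set" where
  "abs_appendage_nodes V E Inp out = {v \<in> V. \<forall>i\<in>Inp. appendage_node E i out v}"

definition path_equiv :: "('n \<times> 'n) set \<Rightarrow> 'n set \<Rightarrow> 'n \<Rightarrow> 'n \<Rightarrow> bool" where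
  "path_equiv E W a b \<longleftrightarrow> a \<in> W \<and> b \<in> W \<and>
     (a, b) \<in> (E \<inter> W \<times> W)\<^sup>* \<and> (b, a) \<in> (E \<inter> W \<times> W)\<^sup>*"

definition path_component :: "('n \<times> 'n) set \<Rightarrow> 'n set \<Rightarrow> 'n set \<Rightarrow> bool" where
  "path_component E W K \<longleftrightarrow> (\<exists>a\<in>W. K = {b. path_equiv E W a b})"

definition compl_path :: "'n set \<Rightarrow> 'n list \<Rightarrow> 'n set" where
  "compl_path V S = V - set S"

text \<open>Indeterminates are indexed by
  ('n \<times> 'n option): (j, Some l) stands for f_{j,x_l}; (j, None) stands for f_{j,I}.\<close>

type_synonym 'v mpoly = "('v \<Rightarrow>\<^sub>0 nat) \<Rightarrow>\<^sub>0 real"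

definition Var :: "'v \<Rightarrow> 'v mpoly" where
  "Var v = Poly_Mapping.single (Poly_Mapping.single v 1) 1"

text \<open>Generic Jacobian entry (row j, column l): indeterminate f_{j,x_l} if there is an arrow
  l -> j or l = j (all nodes are self-coupled), otherwise 0.\<close>
definition jac :: "('n \<times> 'n) set \<Rightarrow> 'n \<Rightarrow> 'n \<Rightarrow> ('n \<times> 'n option) mpoly" where
  "jac E j l = (if (l, j) \<in> E \<or> l = j then Var (j, Some l) else 0)"

definition det_on :: "'n set \<Rightarrow> ('n \<Rightarrow> 'n \<Rightarrow> 'a::comm_ring_1) \<Rightarrow> 'a" where
  "det_on K A = (\<Sum>p \<in> {p. p permutes K}. of_int (sign p) * (\<Prod>i\<in>K. A i (p i)))"

definition H_mat :: "('n \<times> 'n) set \<Rightarrow> 'n set \<Rightarrow> 'n \<Rightarrow> 'n \<Rightarrow> 'n \<Rightarrow> ('n \<times> 'n option) mpoly" where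
  "H_mat E Inp out = (\<lambda>j l. if l = out then (if j \<in> Inp then - Var (j, None) else 0) else jac E j l)"

end

theory Submission
  imports Defs "HOL-Computational_Algebra.Polynomial" "HOL-Library.Transitive_Closure_Table"
begin

definition wt :: "'v \<Rightarrow> 'v \<Rightarrow> ('v \<Rightarrow>\<^sub>0 nat) \<Rightarrow> nat" where
  "wt v u m = Poly_Mapping.lookup m v + Poly_Mapping.lookup m u"

lemma wt_add: "wt v u (a + b) = wt v u a + wt v u b"
  by (simp add: wt_def lookup_add)

lemma wt_zero[simp]: "wt v u 0 = 0"
  by (simp add: wt_def)

definition psi :: "'v \<Rightarrow> 'v \<Rightarrow> 'v mpoly \<Rightarrow> 'v mpoly poly" where
  "psi v u P = (\<Sum>m\<in>Poly_Mapping.keys P. monom (Poly_Mapping.single m (Poly_Mapping.lookup P m)) (wt v u m))"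

lemma psi_sum:
  assumes "finite S" "Poly_Mapping.keys P \<subseteq> S"
  shows "psi v u P = (\<Sum>m\<in>S. monom (Poly_Mapping.single m (Poly_Mapping.lookup P m)) (wt v u m))"
  unfolding psi_def
  by (rule sum.mono_neutral_left) (use assms in \<open>auto simp: in_keys_iff\<close>)

lemma psi_add: "psi v u (P + Q) = psi v u P + psi v u Q"
proof -
  let ?S = "Poly_Mapping.keys P \<union> Poly_Mapping.keys Q"
  have f: "finite ?S" by simp
  have "psi v u (P + Q) = (\<Sum>m\<in>?S. monom (Poly_Mapping.single m (Poly_Mapping.lookup (P+Q) m)) (wt v u m))"
    by (rule psi_sum[OF f]) (rule keys_add)
  also have "\<dots> = (\<Sum>m\<in>?S. monom (Poly_Mapping.single m (Poly_Mapping.lookup P m)) (wt v u m)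
       + monom (Poly_Mapping.single m (Poly_Mapping.lookup Q m)) (wt v u m))"
    by (simp add: lookup_add single_add add_monom)
  also have "\<dots> = psi v u P + psi v u Q"
    by (simp add: sum.distrib psi_sum[OF f])
  finally show ?thesis .
qed

lemma psi_zero[simp]: "psi v u 0 = 0"
  by (simp add: psi_def)

lemma psi_single: "psi v u (Poly_Mapping.single m c) = monom (Poly_Mapping.single m c) (wt v u m)"
proof (cases "c = 0")
  case True then show ?thesis by simp
next
  case False
  then show ?thesis by (simp add: psi_def)
qed

lemma update_single_add:
  assumes "a \<notin> Poly_Mapping.keys f"
  shows "Poly_Mapping.update a b f = Poly_Mapping.single a b + f"
  using assms by (intro poly_mapping_eqI) (auto simp: lookup_update lookup_add lookup_single in_keys_iff)

lemma psi_mult_single: "psi v u (Poly_Mapping.single m c * Q) = psi v u (Poly_Mapping.single m c) * psi v u Q"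
proof (induction Q rule: update_induct)
  case const then show ?case by simp
next
  case (update a b f)
  show ?case using update
    by (simp add: update_single_add distrib_left psi_add mult_single psi_single mult_monom wt_add)
qed

lemma psi_mult: "psi v u (P * Q) = psi v u P * psi v u Q"
proof (induction P rule: update_induct)
  case const then show ?case by simp
next
  case (update a b f)
  show ?case using update
    by (simp add: update_single_add distrib_right psi_add psi_mult_single)
qed

lemma lookup_coeff_psi:
  "Poly_Mapping.lookup (coeff (psi v u P) k) m0 = (if wt v u m0 = k then Poly_Mapping.lookup P m0 else 0)"
proof -
  have "Poly_Mapping.lookup (coeff (psi v u P) k) m0 =
     (\<Sum>m\<in>Poly_Mapping.keys P. (if k = wt v u m then Poly_Mapping.lookup (Poly_Mapping.single m (Poly_Mapping.lookup P m)) m0 else 0))"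
    by (simp add: psi_def coeff_sum coeff_monom lookup_sum; intro sum.cong; auto)
  also have "\<dots> = (\<Sum>m\<in>Poly_Mapping.keys P. (if m = m0 then (if wt v u m0 = k then Poly_Mapping.lookup P m0 else 0) else 0))"
    by (rule sum.cong) (auto simp: lookup_single)
  also have "\<dots> = (if wt v u m0 = k then Poly_Mapping.lookup P m0 else 0)"
    by (auto simp: in_keys_iff)
  finally show ?thesis .
qed

lemma wt_le_degree:
  assumes "m \<in> Poly_Mapping.keys P"
  shows "wt v u m \<le> degree (psi v u P)"
proof (rule le_degree)
  have "Poly_Mapping.lookup (coeff (psi v u P) (wt v u m)) m \<noteq> 0"
    using assms by (simp add: lookup_coeff_psi in_keys_iff)
  then show "coeff (psi v u P) (wt v u m) \<noteq> 0" by auto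
qed

lemma psi_nonzero: "P \<noteq> 0 \<Longrightarrow> psi v u P \<noteq> 0"
proof -
  assume "P \<noteq> 0"
  then obtain m where m: "m \<in> Poly_Mapping.keys P"
    by (metis all_not_in_conv keys_eq_empty)
  have "Poly_Mapping.lookup (coeff (psi v u P) (wt v u m)) m \<noteq> 0"
    using m by (simp add: lookup_coeff_psi in_keys_iff)
  then show ?thesis by auto
qed

lemma degree_attained:
  assumes "P \<noteq> 0"
  shows "\<exists>m\<in>Poly_Mapping.keys P. wt v u m = degree (psi v u P)"
proof -
  have "coeff (psi v u P) (degree (psi v u P)) \<noteq> 0"
    using psi_nonzero[OF assms] by simp
  then obtain m where "Poly_Mapping.lookup (coeff (psi v u P) (degree (psi v u P))) m \<noteq> 0"
    by (metis lookup_zero poly_mapping_eqI)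
  then show ?thesis
    by (auto simp: lookup_coeff_psi in_keys_iff split: if_splits)
qed

lemma degree_psi_mult:
  fixes A B :: "('v::linorder) mpoly"
  assumes "A \<noteq> 0" "B \<noteq> 0"
  shows "degree (psi v u (A * B)) = degree (psi v u A) + degree (psi v u B)"
  using assms by (simp add: psi_mult degree_mult_eq psi_nonzero)

fun cyc :: "'a list \<Rightarrow> 'a \<Rightarrow> 'a" where
  "cyc [] = id"
| "cyc [a] = id"
| "cyc (a # b # rest) = cyc (b # rest) \<circ> Transposition.transpose a b"

lemma cyc_path:
  assumes "rtrancl_path R x xs y" "distinct (x # xs)"
  shows "cyc (x # xs) permutes set (x # xs) \<and> cyc (x # xs) x = y \<and> (\<forall>i\<in>set xs. R (cyc (x # xs) i) i)"
  using assms
proof (induction rule: rtrancl_path.induct)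
  case (base x)
  then show ?case by (simp add: permutes_id id_def)
next
  case (step x z zs y)
  let ?q = "cyc (z # zs)"
  have IH: "?q permutes set (z # zs)" "?q z = y" "\<forall>i\<in>set zs. R (?q i) i"
    using step by auto
  have xn: "x \<notin> set (z # zs)" using step.prems by auto
  have qx: "?q x = x" using permutes_not_in[OF IH(1) xn] .
  have eq: "cyc (x # z # zs) = ?q \<circ> Transposition.transpose x z" by simp
  have p1: "cyc (x # z # zs) permutes set (x # z # zs)"
    unfolding eq
    by (rule permutes_compose[OF permutes_swap_id permutes_subset[OF IH(1)]]) auto
  have p2: "cyc (x # z # zs) x = y" using IH(2) by simp
  have p3: "\<forall>i\<in>set (z # zs). R (cyc (x # z # zs) i) i"
  proof
    fix i assume i: "i \<in> set (z # zs)"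
    show "R (cyc (x # z # zs) i) i"
    proof (cases "i = z")
      case True
      then show ?thesis using qx step.hyps(1) by simp
    next
      case False
      then have "i \<in> set zs" "i \<noteq> x" using i xn by auto
      then show ?thesis using IH(3) False by (simp add: transpose_apply_other)
    qed
  qed
  show ?case using p1 p2 p3 by blast
qed

definition valid :: "('n \<times> 'n) set \<Rightarrow> 'n set \<Rightarrow> ('n \<Rightarrow> 'n) \<Rightarrow> bool" where
  "valid E K p \<longleftrightarrow> p permutes K \<and> (\<forall>i\<in>K. p i = i \<or> (p i, i) \<in> E)"

lemma valid_cycle:
  assumes "j \<in> K" "l \<in> K" "(l, j) \<in> E" "(j, l) \<in> (E \<inter> K \<times> K)\<^sup>*"
  shows "\<exists>p. valid E K p \<and> p j = l"
proof (cases "l = j")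
  case True
  then show ?thesis by (intro exI[of _ id]) (auto simp: valid_def permutes_id)
next
  case False
  let ?R = "\<lambda>a b. (a, b) \<in> E \<inter> K \<times> K"
  have "?R\<^sup>*\<^sup>* j l" using assms(4)
  proof -
    have "{(x, y). (x, y) \<in> E \<inter> K \<times> K} = E \<inter> K \<times> K" by auto
    then show ?thesis using assms(4) by (simp add: rtranclp_rtrancl_eq)
  qed
  then obtain xs0 where "rtrancl_path ?R j xs0 l" by (auto simp: rtranclp_eq_rtrancl_path)
  then obtain xs where xs: "rtrancl_path ?R j xs l" "distinct (j # xs)"
    by (rule rtrancl_path_distinct)
  have setK: "set (j # xs) \<subseteq> K"
  proof -
    have "set xs \<subseteq> K" using xs(1)
      by (induction rule: rtrancl_path.induct) auto
    then show ?thesis using assms(1) by auto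
  qed
  note c = cyc_path[OF xs]
  let ?p = "cyc (j # xs)"
  have perm: "?p permutes K" using c permutes_subset setK by blast
  have "\<forall>i\<in>K. ?p i = i \<or> (?p i, i) \<in> E"
  proof
    fix i assume "i \<in> K"
    show "?p i = i \<or> (?p i, i) \<in> E"
    proof (cases "i \<in> set (j # xs)")
      case False then show ?thesis using c permutes_not_in by metis
    next
      case True
      then have "i = j \<or> i \<in> set xs" by auto
      then show ?thesis using c assms(3) by auto
    qed
  qed
  then show ?thesis using perm c by (auto simp: valid_def)
qed

definition monoK :: "'n set \<Rightarrow> ('n \<Rightarrow> 'n) \<Rightarrow> ('n \<times> 'n option) \<Rightarrow>\<^sub>0 nat" where
  "monoK K p = (\<Sum>i\<in>K. Poly_Mapping.single (i, Some (p i)) 1)"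

lemma prod_single:
  assumes "finite K"
  shows "(\<Prod>i\<in>K. Poly_Mapping.single (f i) (g i :: 'b::comm_semiring_1)) =
         Poly_Mapping.single (\<Sum>i\<in>K. f i :: 'a::comm_monoid_add) (\<Prod>i\<in>K. g i)"
  using assms by (induction K rule: finite_induct) (auto simp: mult_single)

lemma lookup_mono_Some:
  assumes "finite K"
  shows "Poly_Mapping.lookup (monoK K p) (j, Some l) = (if j \<in> K \<and> l = p j then 1 else 0)"
proof -
  have "Poly_Mapping.lookup (monoK K p) (j, Some l) = (\<Sum>i\<in>K. if i = j \<and> p i = l then 1 else 0)"
    unfolding monoK_def lookup_sum by (intro sum.cong) (auto simp: lookup_single)
  also have "\<dots> = (\<Sum>i\<in>K. if i = j then (if p j = l then 1 else 0) else 0)"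
    by (intro sum.cong) auto
  also have "\<dots> = (if j \<in> K \<and> l = p j then 1 else 0)"
    using assms by (simp add: sum.delta) 
  finally show ?thesis by auto
qed

lemma lookup_mono_None:
  "Poly_Mapping.lookup (monoK K p) (j, None) = 0"
  unfolding monoK_def lookup_sum by (simp add: lookup_single)

lemma mono_inj:
  assumes "finite K" "valid E K p" "valid E K q" "monoK K p = monoK K q"
  shows "p = q"
proof
  fix j
  show "p j = q j"
  proof (cases "j \<in> K")
    case True
    have "Poly_Mapping.lookup (monoK K p) (j, Some (p j)) = Poly_Mapping.lookup (monoK K q) (j, Some (p j))"
      using assms(4) by simp
    then show ?thesis using True assms(1) by (simp add: lookup_mono_Some split: if_splits)
  next
    case False
    then show ?thesis using assms(2,3) by (metis valid_def permutes_not_in)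
  qed
qed

lemma jac_prod_valid:
  assumes "finite K" "valid E K p"
  shows "(\<Prod>i\<in>K. jac E i (p i)) = Poly_Mapping.single (monoK K p) 1"
proof -
  have "(\<Prod>i\<in>K. jac E i (p i)) = (\<Prod>i\<in>K. Poly_Mapping.single (Poly_Mapping.single (i, Some (p i)) 1) 1)"
    using assms(2) by (intro prod.cong) (auto simp: valid_def jac_def Var_def)
  also have "\<dots> = Poly_Mapping.single (monoK K p) 1"
    by (simp add: prod_single[OF assms(1)] monoK_def)
  finally show ?thesis .
qed

lemma jac_prod_invalid:
  assumes "finite K" "p permutes K" "\<not> valid E K p"
  shows "(\<Prod>i\<in>K. jac E i (p i)) = 0"
proof -
  obtain i where "i \<in> K" "p i \<noteq> i" "(p i, i) \<notin> E" using assms(2,3) by (auto simp: valid_def)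
  then have "jac E i (p i) = 0" by (simp add: jac_def)
  then show ?thesis using assms(1) \<open>i \<in> K\<close> by (meson prod_zero)
qed

lemma det_expand:
  assumes "finite K"
  shows "det_on K (jac E) = (\<Sum>p\<in>{p. valid E K p}. Poly_Mapping.single (monoK K p) (of_int (sign p)))"
proof -
  have fin: "finite {p. p permutes K}" using finite_permutations[OF assms] .
  have sub: "{p. valid E K p} \<subseteq> {p. p permutes K}" by (auto simp: valid_def)
  have "det_on K (jac E) = (\<Sum>p\<in>{p. valid E K p}. of_int (sign p) * (\<Prod>i\<in>K. jac E i (p i)))"
    unfolding det_on_def
    by (rule sum.mono_neutral_right[OF fin sub]) (auto simp: jac_prod_invalid[OF assms])
  also have "\<dots> = (\<Sum>p\<in>{p. valid E K p}. Poly_Mapping.single (monoK K p) (of_int (sign p)))"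
    apply (intro sum.cong refl)
    apply (simp add: jac_prod_valid[OF assms])
    by (metis add_0 mult.right_neutral mult_single single_of_int)
  finally show ?thesis .
qed

lemma lookup_det:
  assumes "finite K"
  shows "Poly_Mapping.lookup (det_on K (jac E)) m =
     (\<Sum>p\<in>{p. valid E K p}. if monoK K p = m then of_int (sign p) else 0)"
  unfolding det_expand[OF assms] lookup_sum by (intro sum.cong) (auto simp: lookup_single)

lemma lookup_det_mono:
  assumes "finite K" "valid E K p0"
  shows "Poly_Mapping.lookup (det_on K (jac E)) (monoK K p0) = of_int (sign p0)"
proof -
  have "Poly_Mapping.lookup (det_on K (jac E)) (monoK K p0) =
     (\<Sum>p\<in>{p. valid E K p}. if p = p0 then of_int (sign p) else 0)"
    unfolding lookup_det[OF assms(1)]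
    by (intro sum.cong refl) (use mono_inj[OF assms(1) _ assms(2)] in auto)
  also have "\<dots> = of_int (sign p0)"
  proof -
    have fv: "finite {p. valid E K p}"
      by (rule finite_subset[OF _ finite_permutations[OF assms(1)]]) (auto simp: valid_def)
    show ?thesis using assms(2) fv by simp
  qed
  finally show ?thesis .
qed

lemma keys_det:
  assumes "finite K" "m \<in> Poly_Mapping.keys (det_on K (jac E))"
  shows "\<exists>p. valid E K p \<and> m = monoK K p"
proof (rule ccontr)
  assume "\<not> ?thesis"
  then have "Poly_Mapping.lookup (det_on K (jac E)) m = 0"
    unfolding lookup_det[OF assms(1)] by (intro sum.neutral) auto
  then show False using assms(2) by (simp add: in_keys_iff)
qed

lemma mono_in_keys:
  assumes "finite K" "valid E K p"
  shows "monoK K p \<in> Poly_Mapping.keys (det_on K (jac E))"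
  using lookup_det_mono[OF assms] by (simp add: in_keys_iff sign_def)

lemma alg1:
  fixes A B :: "('v::linorder) mpoly"
  assumes "A \<noteq> 0" "B \<noteq> 0" "mA \<in> Poly_Mapping.keys A" "mB \<in> Poly_Mapping.keys B"
  shows "\<exists>m\<in>Poly_Mapping.keys (A * B). wt v w mA + wt v w mB \<le> wt v w m"
proof -
  have "A * B \<noteq> 0" using assms by simp
  then obtain m where m: "m \<in> Poly_Mapping.keys (A * B)" "wt v w m = degree (psi v w (A * B))"
    using degree_attained[of "A * B" v w] by auto
  have "wt v w mA + wt v w mB \<le> degree (psi v w A) + degree (psi v w B)"
    using wt_le_degree[OF assms(3), of v w] wt_le_degree[OF assms(4), of v w] by (rule add_mono)
  also have "\<dots> = wt v w m" using m(2) degree_psi_mult[OF assms(1,2)] by simp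
  finally show ?thesis using m(1) by blast
qed

lemma alg2:
  fixes A B :: "('v::linorder) mpoly"
  assumes "m \<in> Poly_Mapping.keys (A * B)" "Poly_Mapping.lookup m v \<noteq> 0"
  shows "(\<exists>mA\<in>Poly_Mapping.keys A. Poly_Mapping.lookup mA v \<noteq> 0) \<or>
         (\<exists>mB\<in>Poly_Mapping.keys B. Poly_Mapping.lookup mB v \<noteq> 0)"
proof -
  obtain a b where "m = a + b" "a \<in> Poly_Mapping.keys A" "b \<in> Poly_Mapping.keys B"
  proof -
    have "m \<in> {a + b | a b. a \<in> Poly_Mapping.keys A \<and> b \<in> Poly_Mapping.keys B}"
      using keys_mult assms(1) by (rule subsetD)
    then show ?thesis using that by auto
  qed
  then show ?thesis using assms(2) by (auto simp: lookup_add)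
qed

lemma const_unit:
  fixes B :: "('v::linorder) mpoly"
  assumes "B \<noteq> 0" "\<forall>m\<in>Poly_Mapping.keys B. m = 0"
  shows "B dvd 1"
proof -
  let ?c = "Poly_Mapping.lookup B 0"
  have B: "B = Poly_Mapping.single 0 ?c"
    by (rule poly_mapping_eqI) (use assms(2) in \<open>auto simp: lookup_single in_keys_iff when_def\<close>)
  have "?c \<noteq> 0" using assms(1) B by (metis single_zero)
  then have "B * Poly_Mapping.single 0 (1 / ?c) = 1"
    by (subst B) (simp add: mult_single)
  then show ?thesis by (metis dvdI)
qed

context
  fixes E :: "('n::linorder \<times> 'n) set" and K :: "'n set"
  assumes finK: "finite K"
begin

abbreviation "DD \<equiv> det_on K (jac E)"

lemma kd_le1:
  assumes "m \<in> Poly_Mapping.keys DD"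
  shows "Poly_Mapping.lookup m v \<le> 1"
proof -
  obtain p where "m = monoK K p" using keys_det[OF finK assms] by blast
  then show ?thesis
    by (cases v; cases "snd v") (auto simp: lookup_mono_Some[OF finK] lookup_mono_None)
qed

lemma kd_None:
  assumes "m \<in> Poly_Mapping.keys DD"
  shows "Poly_Mapping.lookup m (j, None) = 0"
proof -
  obtain p where "m = monoK K p" using keys_det[OF finK assms] by blast
  then show ?thesis by (simp add: lookup_mono_None)
qed

lemma kd_Some:
  assumes "m \<in> Poly_Mapping.keys DD" "Poly_Mapping.lookup m (j, Some l) \<noteq> 0"
  shows "j \<in> K"
proof -
  obtain p where "m = monoK K p" using keys_det[OF finK assms(1)] by blast
  then show ?thesis using assms(2) by (auto simp: lookup_mono_Some[OF finK] split: if_splits)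
qed

lemma kd_row:
  assumes "m \<in> Poly_Mapping.keys DD" "Poly_Mapping.lookup m (j, Some l) \<noteq> 0"
    "Poly_Mapping.lookup m (j, Some l') \<noteq> 0"
  shows "l = l'"
proof -
  obtain p where "m = monoK K p" using keys_det[OF finK assms(1)] by blast
  then show ?thesis using assms(2,3) by (auto simp: lookup_mono_Some[OF finK] split: if_splits)
qed

lemma kd_col:
  assumes "m \<in> Poly_Mapping.keys DD" "Poly_Mapping.lookup m (j, Some l) \<noteq> 0"
    "Poly_Mapping.lookup m (j', Some l) \<noteq> 0"
  shows "j = j'"
proof -
  obtain p where p: "valid E K p" "m = monoK K p" using keys_det[OF finK assms(1)] by blast
  then have "p j = p j'" using assms(2,3) by (auto simp: lookup_mono_Some[OF finK] split: if_splits)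
  then show ?thesis using p(1) by (auto simp: valid_def dest: permutes_inj injD)
qed

lemma occ_edge:
  assumes "j \<in> K" "l \<in> K" "(l, j) \<in> E \<or> l = j" "(j, l) \<in> (E \<inter> K \<times> K)\<^sup>*"
  shows "\<exists>m\<in>Poly_Mapping.keys DD. Poly_Mapping.lookup m (j, Some l) \<noteq> 0"
proof -
  obtain p where p: "valid E K p" "p j = l"
  proof (cases "l = j")
    case True
    then show ?thesis using that[of id] by (auto simp: valid_def permutes_id)
  next
    case False
    then show ?thesis using valid_cycle[OF assms(1,2) _ assms(4)] assms(3) that by blast
  qed
  show ?thesis
    using mono_in_keys[OF finK p(1)] p(2) assms(1)
    by (intro bexI[of _ "monoK K p"]) (auto simp: lookup_mono_Some[OF finK])
qed

lemma conflict:
  fixes A B :: "('n \<times> 'n option) mpoly"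
  assumes D: "DD = A * B" and "A \<noteq> 0" "B \<noteq> 0"
    and mA: "mA \<in> Poly_Mapping.keys A" "Poly_Mapping.lookup mA v \<noteq> 0"
    and mB: "mB \<in> Poly_Mapping.keys B" "Poly_Mapping.lookup mB w \<noteq> 0"
  shows "v \<noteq> w \<and> (\<exists>m\<in>Poly_Mapping.keys DD. Poly_Mapping.lookup m v \<noteq> 0 \<and> Poly_Mapping.lookup m w \<noteq> 0)"
proof -
  obtain m where m: "m \<in> Poly_Mapping.keys DD" "wt v w mA + wt v w mB \<le> wt v w m"
    using alg1[OF assms(2,3) mA(1) mB(1), of v w] D by auto
  have le: "Poly_Mapping.lookup m v \<le> 1" "Poly_Mapping.lookup m w \<le> 1"
    using kd_le1[OF m(1)] by auto
  have a1: "Poly_Mapping.lookup mA v \<ge> 1" "Poly_Mapping.lookup mB w \<ge> 1"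
    using mA(2) mB(2) by auto
  have w1: "wt v w mA \<ge> Poly_Mapping.lookup mA v" "wt v w mB \<ge> Poly_Mapping.lookup mB w"
    unfolding wt_def by auto
  show ?thesis
  proof (cases "v = w")
    case True
    have "wt v w mA \<ge> 2" "wt v w mB \<ge> 2" "wt v w m \<le> 2"
      using a1 le True unfolding wt_def by auto
    then show ?thesis using m(2) by linarith
  next
    case False
    have "wt v w m = Poly_Mapping.lookup m v + Poly_Mapping.lookup m w" by (simp add: wt_def)
    then have "Poly_Mapping.lookup m v = 1 \<and> Poly_Mapping.lookup m w = 1"
      using m(2) a1 w1 le by linarith
    then show ?thesis using False m(1) by (auto intro!: bexI[of _ m])
  qed
qed

end

context
  fixes E :: "('n::linorder \<times> 'n) set" and K :: "'n set"
  assumes finK: "finite K"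
    and sc: "\<forall>a\<in>K. \<forall>b\<in>K. (a, b) \<in> (E \<inter> K \<times> K)\<^sup>*"
begin

lemma one_side:
  fixes A B :: "('n \<times> 'n option) mpoly"
  assumes D: "det_on K (jac E) = A * B" and A0: "A \<noteq> 0" and B0: "B \<noteq> 0" and k0: "k0 \<in> K"
    and inA0: "\<exists>mA\<in>Poly_Mapping.keys A. Poly_Mapping.lookup mA (k0, Some k0) \<noteq> 0"
  shows "B dvd 1"
proof -
  define inA where "inA v \<longleftrightarrow> (\<exists>mA\<in>Poly_Mapping.keys A. Poly_Mapping.lookup mA v \<noteq> 0)" for v
  define inB where "inB v \<longleftrightarrow> (\<exists>mB\<in>Poly_Mapping.keys B. Poly_Mapping.lookup mB v \<noteq> 0)" for v
  have confl: "v \<noteq> w \<and> (\<exists>m\<in>Poly_Mapping.keys (det_on K (jac E)).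
      Poly_Mapping.lookup m v \<noteq> 0 \<and> Poly_Mapping.lookup m w \<noteq> 0)"
    if "inA v" "inB w" for v w
    using that conflict[OF finK D A0 B0] unfolding inA_def inB_def by blast
  have occ: "inA v \<or> inB v" if "\<exists>m\<in>Poly_Mapping.keys (det_on K (jac E)). Poly_Mapping.lookup m v \<noteq> 0" for v
    using that alg2[of _ A B v] D unfolding inA_def inB_def by metis
  have step1: "inA (j, Some j)" if "(k0, j) \<in> (E \<inter> K \<times> K)\<^sup>*" for j
    using that
  proof (induction rule: rtrancl_induct)
    case base
    then show ?case using inA0 by (simp add: inA_def)
  next
    case (step y z)
    have yz: "y \<in> K" "z \<in> K" "(y, z) \<in> E" using step.hyps(2) by auto
    have "inA (z, Some y) \<or> inB (z, Some y)"
      using occ occ_edge[OF finK yz(2,1)] yz sc by blast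
    moreover have "\<not> inB (z, Some y)"
    proof
      assume "inB (z, Some y)"
      from confl[OF step.IH this] obtain m where
        "(y, Some y) \<noteq> (z, Some y)" "m \<in> Poly_Mapping.keys (det_on K (jac E))"
        "Poly_Mapping.lookup m (y, Some y) \<noteq> 0" "Poly_Mapping.lookup m (z, Some y) \<noteq> 0" by blast
      then show False using kd_col[OF finK] by blast
    qed
    ultimately have zy: "inA (z, Some y)" by blast
    have "inA (z, Some z) \<or> inB (z, Some z)"
      using occ occ_edge[OF finK yz(2,2)] yz by blast
    moreover have "\<not> inB (z, Some z)"
    proof
      assume "inB (z, Some z)"
      from confl[OF zy this] obtain m where
        "(z, Some y) \<noteq> (z, Some z)" "m \<in> Poly_Mapping.keys (det_on K (jac E))"
        "Poly_Mapping.lookup m (z, Some y) \<noteq> 0" "Poly_Mapping.lookup m (z, Some z) \<noteq> 0" by blast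
      then show False using kd_row[OF finK] by blast
    qed
    ultimately show ?case by blast
  qed
  have step2: "mB = 0" if mB: "mB \<in> Poly_Mapping.keys B" for mB
  proof (rule ccontr)
    assume "mB \<noteq> 0"
    then obtain v where v: "Poly_Mapping.lookup mB v \<noteq> 0"
      by (metis lookup_zero poly_mapping_eqI)
    then have iB: "inB v" using mB by (auto simp: inB_def)
    have iA: "inA (k0, Some k0)" using inA0 by (simp add: inA_def)
    from confl[OF iA iB] obtain m where m: "m \<in> Poly_Mapping.keys (det_on K (jac E))"
      "Poly_Mapping.lookup m v \<noteq> 0" by blast
    obtain j opt where vj: "v = (j, opt)" by fastforce
    show False
    proof (cases opt)
      case None
      then show False using kd_None[OF finK m(1)] m(2) vj by simp
    next
      case (Some l)
      then have jK: "j \<in> K" using kd_Some[OF finK m(1)] m(2) vj by simp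
      then have "inA (j, Some j)" using step1 sc k0 by blast
      from confl[OF this iB] obtain m' where
        "(j, Some j) \<noteq> v" "m' \<in> Poly_Mapping.keys (det_on K (jac E))"
        "Poly_Mapping.lookup m' (j, Some j) \<noteq> 0" "Poly_Mapping.lookup m' v \<noteq> 0" by blast
      then show False using kd_row[OF finK] vj Some by blast
    qed
  qed
  show ?thesis using const_unit[OF B0] step2 by blast
qed

lemma det_irreducible:
  assumes Kne: "K \<noteq> {}"
  shows "irreducible (det_on K (jac E))"
proof -
  let ?D = "det_on K (jac E)"
  obtain k0 where k0: "k0 \<in> K" using Kne by blast
  have vid: "valid E K id" by (simp add: valid_def permutes_id)
  have mid: "monoK K id \<in> Poly_Mapping.keys ?D" using mono_in_keys[OF finK vid] .
  have lid: "Poly_Mapping.lookup (monoK K id) (k0, Some k0) = 1"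
    using k0 by (simp add: lookup_mono_Some[OF finK])
  have D0: "?D \<noteq> 0" using mid by auto
  have nu: "\<not> ?D dvd 1"
  proof
    assume "?D dvd 1"
    then obtain X where X: "1 = ?D * X" by (auto elim: dvdE)
    then have X0: "X \<noteq> 0" by auto
    then obtain mX where mX: "mX \<in> Poly_Mapping.keys X"
      by (metis all_not_in_conv keys_eq_empty)
    from alg1[OF D0 X0 mid mX, of "(k0, Some k0)" "(k0, Some k0)"] X[symmetric]
    obtain m where m: "m \<in> Poly_Mapping.keys (1 :: ('n \<times> 'n option) mpoly)"
      "wt (k0, Some k0) (k0, Some k0) (monoK K id) + wt (k0, Some k0) (k0, Some k0) mX
        \<le> wt (k0, Some k0) (k0, Some k0) m" by auto
    have "m = 0" using m(1) by simp
    then show False using m(2) lid by (simp add: wt_def)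
  qed
  have fac: "A dvd 1 \<or> B dvd 1" if AB: "?D = A * B" for A B
  proof -
    have A0: "A \<noteq> 0" and B0: "B \<noteq> 0" using AB D0 by auto
    have "(\<exists>mA\<in>Poly_Mapping.keys A. Poly_Mapping.lookup mA (k0, Some k0) \<noteq> 0) \<or>
          (\<exists>mB\<in>Poly_Mapping.keys B. Poly_Mapping.lookup mB (k0, Some k0) \<noteq> 0)"
      using alg2[of "monoK K id" A B "(k0, Some k0)"] mid AB lid by simp
    then show ?thesis
    proof
      assume "\<exists>mA\<in>Poly_Mapping.keys A. Poly_Mapping.lookup mA (k0, Some k0) \<noteq> 0"
      then show ?thesis using one_side[OF AB A0 B0 k0] by blast
    next
      assume "\<exists>mB\<in>Poly_Mapping.keys B. Poly_Mapping.lookup mB (k0, Some k0) \<noteq> 0"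
      moreover have "?D = B * A" using AB by (simp add: mult.commute)
      ultimately show ?thesis using one_side[OF _ B0 A0 k0] by blast
    qed
  qed
  show ?thesis unfolding irreducible_def using D0 nu fac by blast
qed

end

definition rs :: "'a set \<Rightarrow> ('a \<Rightarrow> 'a) \<Rightarrow> 'a \<Rightarrow> 'a" where
  "rs S p = (\<lambda>x. if x \<in> S then p x else x)"

lemma term_split:
  fixes A :: "'n \<Rightarrow> 'n \<Rightarrow> 'a::comm_ring_1"
  assumes fV: "finite V" and KV: "K \<subseteq> V" and q: "q permutes K" and r: "r permutes (V - K)"
  shows "of_int (sign (q \<circ> r)) * (\<Prod>i\<in>V. A i ((q \<circ> r) i)) =
         (of_int (sign q) * (\<Prod>i\<in>K. A i (q i))) * (of_int (sign r) * (\<Prod>i\<in>V - K. A i (r i)))"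
proof -
  have fK: "finite K" using finite_subset[OF KV fV] .
  have "sign (q \<circ> r) = sign q * sign r"
    by (rule sign_compose) (use q r fK fV in \<open>auto simp: permutation_permutes\<close>)
  moreover have "(\<Prod>i\<in>V. A i ((q \<circ> r) i)) = (\<Prod>i\<in>V - K. A i ((q \<circ> r) i)) * (\<Prod>i\<in>K. A i ((q \<circ> r) i))"
    by (rule prod.subset_diff[OF KV fV])
  moreover have "(\<Prod>i\<in>K. A i ((q \<circ> r) i)) = (\<Prod>i\<in>K. A i (q i))"
    by (intro prod.cong refl) (simp add: permutes_not_in[OF r])
  moreover have "(\<Prod>i\<in>V - K. A i ((q \<circ> r) i)) = (\<Prod>i\<in>V - K. A i (r i))"
  proof (intro prod.cong refl)
    fix i assume "i \<in> V - K"
    then have "r i \<in> V - K" using permutes_in_image[OF r] by simp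
    then show "A i ((q \<circ> r) i) = A i (r i)" using permutes_not_in[OF q] by simp
  qed
  ultimately show ?thesis by (simp add: algebra_simps)
qed

lemma det_split:
  fixes A :: "'n \<Rightarrow> 'n \<Rightarrow> 'a::comm_ring_1"
  assumes fV: "finite V" and KV: "K \<subseteq> V"
  shows "(\<Sum>p\<in>{p. p permutes V \<and> (\<forall>i\<in>K. p i \<in> K)}. of_int (sign p) * (\<Prod>i\<in>V. A i (p i)))
         = det_on K A * det_on (V - K) A"
proof -
  have fK: "finite K" using finite_subset[OF KV fV] .
  let ?S = "{p. p permutes V \<and> (\<forall>i\<in>K. p i \<in> K)}"
  let ?T = "{q. q permutes K} \<times> {r. r permutes (V - K)}"
  let ?g = "\<lambda>p. of_int (sign p) * (\<Prod>i\<in>V. A i (p i)) :: 'a"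
  let ?h = "\<lambda>(q, r). (of_int (sign q) * (\<Prod>i\<in>K. A i (q i))) * (of_int (sign r) * (\<Prod>i\<in>V - K. A i (r i))) :: 'a"
  let ?i = "\<lambda>(q, r). q \<circ> r"
  let ?j = "\<lambda>p. (rs K p, rs (V - K) p)"
  have facts: "rs K p permutes K \<and> rs (V - K) p permutes (V - K) \<and> rs K p \<circ> rs (V - K) p = p"
    if "p \<in> ?S" for p
  proof -
    have p: "p permutes V" and pK: "\<forall>i\<in>K. p i \<in> K" using that by auto
    have inj: "inj p" using permutes_inj[OF p] .
    have imK: "p ` K = K"
      by (rule endo_inj_surj[OF fK]) (use pK inj in \<open>auto simp: inj_on_def inj_def\<close>)
    have imV: "p ` V = V" using permutes_image[OF p] .
    have imR: "p ` (V - K) = V - K" using image_set_diff[OF inj] imK imV by simp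
    have b1: "bij_betw (rs K p) K K"
      unfolding bij_betw_def using imK inj by (auto simp: rs_def inj_on_def inj_def image_def)
    have b2: "bij_betw (rs (V - K) p) (V - K) (V - K)"
      unfolding bij_betw_def using imR inj by (auto simp: rs_def inj_on_def inj_def image_def)
    have q: "rs K p permutes K" by (rule bij_imp_permutes[OF b1]) (simp add: rs_def)
    have r: "rs (V - K) p permutes (V - K)" by (rule bij_imp_permutes[OF b2]) (auto simp: rs_def)
    have c: "rs K p \<circ> rs (V - K) p = p"
    proof
      fix x
      show "(rs K p \<circ> rs (V - K) p) x = p x"
      proof (cases "x \<in> K")
        case True then show ?thesis by (simp add: rs_def)
      next
        case False
        show ?thesis
        proof (cases "x \<in> V")
          case True
          then have "p x \<in> V - K" using imR False by auto
          then show ?thesis using True False by (simp add: rs_def)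
        next
          case xV: False
          then show ?thesis using False permutes_not_in[OF p xV] by (simp add: rs_def)
        qed
      qed
    qed
    show ?thesis using q r c by blast
  qed
  have "sum ?g ?S = sum ?h ?T"
  proof (rule sum.reindex_bij_witness[where i = ?i and j = ?j])
    fix p assume "p \<in> ?S"
    then show "?i (?j p) = p" using facts by auto
  next
    fix p assume "p \<in> ?S"
    then show "?j p \<in> ?T" using facts by auto
  next
    fix qr assume qr: "qr \<in> ?T"
    then obtain q r where qr': "qr = (q, r)" "q permutes K" "r permutes (V - K)" by auto
    have "rs K (q \<circ> r) = q"
    proof
      fix x show "rs K (q \<circ> r) x = q x"
        using permutes_not_in[OF qr'(3)] permutes_not_in[OF qr'(2)] by (auto simp: rs_def)
    qed
    moreover have "rs (V - K) (q \<circ> r) = r"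
    proof
      fix x show "rs (V - K) (q \<circ> r) x = r x"
      proof (cases "x \<in> V - K")
        case True
        then have "r x \<in> V - K" using permutes_in_image[OF qr'(3)] by simp
        then show ?thesis using True permutes_not_in[OF qr'(2)] by (simp add: rs_def)
      next
        case False then show ?thesis using permutes_not_in[OF qr'(3) False] by (auto simp: rs_def)
      qed
    qed
    ultimately show "?j (?i qr) = qr" using qr' by simp
  next
    fix qr assume qr: "qr \<in> ?T"
    then obtain q r where qr': "qr = (q, r)" "q permutes K" "r permutes (V - K)" by auto
    have "q \<circ> r permutes V"
      by (rule permutes_compose[OF permutes_subset[OF qr'(3)] permutes_subset[OF qr'(2) KV]]) auto
    moreover have "\<forall>i\<in>K. (q \<circ> r) i \<in> K"
      using permutes_not_in[OF qr'(3)] permutes_in_image[OF qr'(2)] by simp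
    ultimately show "?i qr \<in> ?S" using qr' by simp
  next
    fix p assume pS: "p \<in> ?S"
    have "?h (?j p) = ?g (rs K p \<circ> rs (V - K) p)"
      using term_split[OF fV KV, of "rs K p" "rs (V - K) p" A] facts[OF pS] by simp
    then show "?h (?j p) = ?g p" using facts[OF pS] by simp
  qed
  also have "\<dots> = det_on K A * det_on (V - K) A"
    unfolding det_on_def sum_product sum.cartesian_product by (simp add: case_prod_beta)
  finally show ?thesis .
qed

lemma H_nz:
  "H_mat E Inp out i l \<noteq> 0 \<Longrightarrow> (l = out \<and> i \<in> Inp) \<or> (l \<noteq> out \<and> ((l, i) \<in> E \<or> l = i))"
  by (auto simp: H_mat_def jac_def split: if_splits)

lemma key_perm:
  fixes V :: "'n::linorder set" and E :: "('n \<times> 'n) set" and Inp :: "'n set" and out :: 'n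
    and K :: "'n set"
  assumes core: "core_network V E Inp out"
    and a: "path_component E (abs_appendage_nodes V E Inp out) K"
    and b: "\<forall>i\<in>Inp. \<forall>S. simple_path E i out S \<longrightarrow>
              (\<forall>x\<in>K. \<forall>y \<in> compl_path V S - K. \<not> path_equiv E (compl_path V S) x y)"
    and p: "p permutes V"
    and NZ: "\<forall>i\<in>V. H_mat E Inp out i (p i) \<noteq> 0"
  shows "out \<notin> K \<and> (\<forall>i\<in>K. p i \<in> K)"
proof -
  have fV: "finite V" and outV: "out \<in> V" and outI: "out \<notin> Inp"
    using core by (auto simp: core_network_def)
  define W where "W = abs_appendage_nodes V E Inp out"
  have KW: "K \<subseteq> W" using a unfolding W_def path_component_def path_equiv_def by auto
  have WV: "W \<subseteq> V" unfolding W_def abs_appendage_nodes_def by auto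
  have perm: "permutation p" using p fV by (auto simp: permutation_permutes)
  have injp: "inj p" using permutes_inj[OF p] .
  have inV: "(p ^^ k) x \<in> V" if "x \<in> V" for k x using permutes_in_funpow_image[OF p that] .
  obtain n0 where n0: "n0 > 0" "(p ^^ n0) out = out" using permutation_self[OF perm] by blast
  define n where "n = (LEAST n. 0 < n \<and> (p ^^ n) out = out)"
  have n: "0 < n" "(p ^^ n) out = out"
    using LeastI[of "\<lambda>n. 0 < n \<and> (p ^^ n) out = out", OF conjI[OF n0]] unfolding n_def by auto
  have nmin: "(p ^^ k) out \<noteq> out" if "0 < k" "k < n" for k
    using not_less_Least[of k "\<lambda>n. 0 < n \<and> (p ^^ n) out = out"] that unfolding n_def by auto
  have neq: "(p ^^ a') out \<noteq> (p ^^ b') out" if "a' < b'" "b' < n" for a' b'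
  proof
    assume eq: "(p ^^ a') out = (p ^^ b') out"
    have "(p ^^ b') out = (p ^^ a') ((p ^^ (b' - a')) out)"
      using that funpow_add[of a' "b' - a'" p] by simp
    then have "(p ^^ (b' - a')) out = out"
      using eq inj_fn[OF injp, of a'] by (metis injD)
    then show False using nmin[of "b' - a'"] that by auto
  qed
  define S where "S = map (\<lambda>k. (p ^^ (n - 1 - k)) out) [0..<n]"
  have lenS: "length S = n" by (simp add: S_def)
  have nthS: "S ! k = (p ^^ (n - 1 - k)) out" if "k < n" for k using that by (simp add: S_def)
  have Sne: "S \<noteq> []" using lenS n by auto
  have hdS: "hd S = (p ^^ (n - 1)) out" using nthS[of 0] n Sne by (simp add: hd_conv_nth)
  have lastS: "last S = out" using nthS[of "n - 1"] n Sne lenS by (simp add: last_conv_nth)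
  have distS: "distinct S"
    unfolding distinct_conv_nth lenS
  proof (intro allI impI)
    fix i j assume ij: "i < n" "j < n" "i \<noteq> j"
    show "S ! i \<noteq> S ! j"
    proof (cases "i < j")
      case True
      have "n - 1 - j < n - 1 - i" "n - 1 - i < n" using True ij by arith+
      then show ?thesis using nthS[OF ij(1)] nthS[OF ij(2)] neq[of "n - 1 - j" "n - 1 - i"] by metis
    next
      case False
      then have "n - 1 - i < n - 1 - j" "n - 1 - j < n" using ij by arith+
      then show ?thesis using nthS[OF ij(1)] nthS[OF ij(2)] neq[of "n - 1 - i" "n - 1 - j"] by metis
    qed
  qed
  have edges: "(S ! k, S ! Suc k) \<in> E" if "Suc k < length S" for k
  proof -
    have k: "Suc k < n" using that lenS by simp
    define s where "s = n - 2 - k"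
    have s1: "n - 1 - k = Suc s" "n - 1 - Suc k = s" using k by (auto simp: s_def)
    define y where "y = (p ^^ s) out"
    have Sk: "S ! k = p y" using nthS[of k] k s1 by (simp add: y_def)
    have Sk1: "S ! Suc k = y" using nthS[of "Suc k"] k s1 by (simp add: y_def)
    have yV: "y \<in> V" using inV outV by (simp add: y_def)
    have py: "p y = (p ^^ Suc s) out" by (simp add: y_def)
    have pyo: "p y \<noteq> out" using nmin[of "Suc s"] py k s1 by auto
    have "(p y, y) \<in> E \<or> p y = y" using H_nz[OF NZ[rule_format, OF yV]] pyo by auto
    moreover have "p y \<noteq> y"
    proof -
      have "Suc s < n" using s1 k by arith
      then show ?thesis using neq[OF lessI, of s] py by (simp add: y_def)
    qed
    ultimately show ?thesis using Sk Sk1 by auto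
  qed
  have hdI: "hd S \<in> Inp"
  proof -
    define z where "z = (p ^^ (n - 1)) out"
    have "p z = (p ^^ Suc (n - 1)) out" by (simp add: z_def)
    also have "Suc (n - 1) = n" using n by simp
    finally have pz: "p z = out" using n by simp
    have "z \<in> V" using inV outV by (simp add: z_def)
    then show ?thesis using H_nz[OF NZ[rule_format, OF \<open>z \<in> V\<close>]] pz hdS by (auto simp: z_def)
  qed
  have sp: "simple_path E (hd S) out S"
    unfolding simple_path_def using Sne lastS distS edges by auto
  have memS: "(p ^^ k) out \<in> set S" if "k < n" for k
  proof -
    have "S ! (n - 1 - k) = (p ^^ k) out" using nthS[of "n - 1 - k"] that n by simp
    then show ?thesis using nth_mem[of "n - 1 - k" S] lenS n by auto
  qed
  have setS: "\<exists>k<n. x = (p ^^ k) out" if "x \<in> set S" for x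
  proof -
    have "\<exists>i<length S. S ! i = x" using that by (simp only: in_set_conv_nth)
    then obtain i where "i < length S" "S ! i = x" by blast
    then have "i < n" "x = S ! i" using lenS by auto
    then show ?thesis using nthS[of i] by (intro exI[of _ "n - 1 - i"]) auto
  qed
  have closS: "(p ^^ t) out \<in> set S" for t
  proof (induction t)
    case 0 then show ?case using memS[of 0] n by simp
  next
    case (Suc t)
    then obtain k where k: "k < n" "(p ^^ t) out = (p ^^ k) out" using setS by blast
    have "(p ^^ Suc t) out = (p ^^ Suc k) out" using k by simp
    then show ?case
    proof (cases "Suc k < n")
      case True then show ?thesis using memS[OF True] \<open>(p ^^ Suc t) out = (p ^^ Suc k) out\<close> by simp
    next
      case False
      then have "Suc k = n" using k by simp
      then show ?thesis using \<open>(p ^^ Suc t) out = (p ^^ Suc k) out\<close> n memS[of 0] by simp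
    qed
  qed
  have clos2: "(p ^^ t) x \<in> set S" if xS: "x \<in> set S" for x t
  proof -
    obtain k where "x = (p ^^ k) out" using setS[OF xS] by blast
    then have "(p ^^ t) x = (p ^^ (t + k)) out" by (simp add: funpow_add)
    then show ?thesis using closS by simp
  qed
  have disj: "x \<notin> set S" if "x \<in> K" for x
  proof
    assume xS: "x \<in> set S"
    have "x \<in> W" using KW that by auto
    then have "appendage_node E (hd S) out x" using hdI unfolding W_def abs_appendage_nodes_def by auto
    then have "\<not> simple_node E (hd S) out x" by (simp add: appendage_node_def)
    then show False using sp xS by (auto simp: simple_node_def)
  qed
  have outS: "out \<in> set S" using lastS Sne by auto
  have outK: "out \<notin> K" using disj outS by auto
  have pK: "p i \<in> K" if iK: "i \<in> K" for i
  proof -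
    have iV: "i \<in> V" using iK KW WV by auto
    obtain N where N: "N > 0" "(p ^^ N) i = i" using permutation_self[OF perm] by blast
    have pow: "(p ^^ (N * j)) i = i" for j
    proof (induction j)
      case 0 then show ?case by simp
    next
      case (Suc j)
      have "(p ^^ (N * Suc j)) i = (p ^^ N) ((p ^^ (N * j)) i)" by (simp add: funpow_add)
      then show ?case using Suc N by simp
    qed
    have orb: "(p ^^ j) i \<notin> set S" for j
    proof
      assume "(p ^^ j) i \<in> set S"
      then have m: "(p ^^ (N * j - j)) ((p ^^ j) i) \<in> set S" by (rule clos2)
      have "j \<le> N * j" using N by (cases N) auto
      then have e1: "N * j - j + j = N * j" by simp
      have e2: "(p ^^ (N * j - j)) ((p ^^ j) i) = (p ^^ (N * j - j + j)) i"
        by (simp add: funpow_add)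
      have "(p ^^ (N * j - j)) ((p ^^ j) i) = i" using e1 e2 pow by simp
      then show False using m disj iK by simp
    qed
    define CS where "CS = compl_path V S"
    have CSd: "CS = V - set S" by (simp add: CS_def compl_path_def)
    have orbCS: "(p ^^ j) i \<in> CS" for j using orb inV[OF iV] CSd by auto
    have stp: "((p ^^ Suc j) i, (p ^^ j) i) \<in> (E \<inter> CS \<times> CS)\<^sup>*" for j
    proof -
      define y where "y = (p ^^ j) i"
      have yV: "y \<in> V" using inV[OF iV] by (simp add: y_def)
      have py: "p y = (p ^^ Suc j) i" by (simp add: y_def)
      have "p y \<noteq> out" using orb[of "Suc j"] outS py by auto
      then have "(p y, y) \<in> E \<or> p y = y" using H_nz[OF NZ[rule_format, OF yV]] by auto
      moreover have "p y \<in> CS" using orbCS[of "Suc j"] py by simp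
      moreover have "y \<in> CS" using orbCS[of j] y_def by simp
      ultimately have "(p y, y) \<in> (E \<inter> CS \<times> CS)\<^sup>*" by auto
      then show ?thesis using py y_def by simp
    qed
    have chain: "((p ^^ (a' + j)) i, (p ^^ j) i) \<in> (E \<inter> CS \<times> CS)\<^sup>*" for a' j
    proof (induction a')
      case 0 then show ?case by simp
    next
      case (Suc a')
      have "((p ^^ Suc (a' + j)) i, (p ^^ (a' + j)) i) \<in> (E \<inter> CS \<times> CS)\<^sup>*" by (rule stp)
      from rtrancl_trans[OF this Suc.IH] show ?case by simp
    qed
    have c1: "(p i, i) \<in> (E \<inter> CS \<times> CS)\<^sup>*" using chain[of 1 0] by simp
    have c2: "(i, p i) \<in> (E \<inter> CS \<times> CS)\<^sup>*"
    proof -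
      have "N - 1 + 1 = N" using N by simp
      then show ?thesis using chain[of "N - 1" 1] N by simp
    qed
    have pe: "path_equiv E CS i (p i)"
      unfolding path_equiv_def using orbCS[of 0] orbCS[of 1] c1 c2 by simp
    have bb: "\<forall>x\<in>K. \<forall>y \<in> compl_path V S - K. \<not> path_equiv E (compl_path V S) x y"
      using b hdI sp by blast
    have "\<not> (p i \<in> CS - K)" using bb iK pe unfolding CS_def by blast
    then show ?thesis using orbCS[of 1] by auto
  qed
  show ?thesis using outK pK by blast
qed


lemma comp_sc:
  assumes "path_component E W K"
  shows "K \<subseteq> W \<and> K \<noteq> {} \<and> (\<forall>a\<in>K. \<forall>b\<in>K. (a, b) \<in> (E \<inter> K \<times> K)\<^sup>*)"
proof -
  obtain a0 where a0: "a0 \<in> W" "K = {b. path_equiv E W a0 b}"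
    using assms by (auto simp: path_component_def)
  have KW: "K \<subseteq> W" using a0 by (auto simp: path_equiv_def)
  have a0K: "a0 \<in> K" using a0 by (simp add: path_equiv_def)
  let ?RW = "E \<inter> W \<times> W" and ?RK = "E \<inter> K \<times> K"
  have inner: "(x, y) \<in> ?RW\<^sup>* \<Longrightarrow> (y, a0) \<in> ?RW\<^sup>* \<longrightarrow> (a0, x) \<in> ?RW\<^sup>* \<longrightarrow> x \<in> W \<longrightarrow> (x, y) \<in> ?RK\<^sup>*"
    for x y
  proof (induction rule: converse_rtrancl_induct)
    case base
    then show ?case by simp
  next
    case (step x x')
    show ?case
    proof (intro impI)
      assume ya: "(y, a0) \<in> ?RW\<^sup>*" and ax: "(a0, x) \<in> ?RW\<^sup>*" and xW: "x \<in> W"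
      have x'W: "x' \<in> W" using step.hyps(1) by auto
      have ax': "(a0, x') \<in> ?RW\<^sup>*" using ax step.hyps(1) by (rule rtrancl_into_rtrancl)
      have x'a: "(x', a0) \<in> ?RW\<^sup>*" using step.hyps(2) ya by (rule rtrancl_trans)
      have xa: "(x, a0) \<in> ?RW\<^sup>*" using step.hyps(1) x'a by (rule converse_rtrancl_into_rtrancl)
      have xK: "x \<in> K" using a0 xW ax xa by (simp add: path_equiv_def)
      have x'K: "x' \<in> K" using a0 x'W ax' x'a by (simp add: path_equiv_def)
      have IH: "(x', y) \<in> ?RK\<^sup>*" using step.IH ya ax' x'W by blast
      have "(x, x') \<in> ?RK" using step.hyps(1) xK x'K by auto
      then show "(x, y) \<in> ?RK\<^sup>*" using IH by (rule converse_rtrancl_into_rtrancl)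
    qed
  qed
  have "\<forall>b\<in>K. \<forall>c\<in>K. (b, c) \<in> ?RK\<^sup>*"
  proof (intro ballI)
    fix b c assume b: "b \<in> K" and c: "c \<in> K"
    have ab: "(a0, b) \<in> ?RW\<^sup>*" "(b, a0) \<in> ?RW\<^sup>*" "b \<in> W" using b a0 by (auto simp: path_equiv_def)
    have ac: "(a0, c) \<in> ?RW\<^sup>*" "(c, a0) \<in> ?RW\<^sup>*" using c a0 by (auto simp: path_equiv_def)
    have "(b, c) \<in> ?RW\<^sup>*" using ab(2) ac(1) by (rule rtrancl_trans)
    then show "(b, c) \<in> ?RK\<^sup>*" using inner ac(2) ab(1) ab(3) by blast
  qed
  then show ?thesis using KW a0K by blast
qed

theorem theorem3p15:
  fixes V :: "'n::linorder set" and E :: "('n \<times> 'n) set" and Inp :: "'n set" and out :: 'n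
    and K :: "'n set"
  assumes core: "core_network V E Inp out"
    and a: "path_component E (abs_appendage_nodes V E Inp out) K"
    and b: "\<forall>i\<in>Inp. \<forall>S. simple_path E i out S \<longrightarrow>
              (\<forall>x\<in>K. \<forall>y \<in> compl_path V S - K. \<not> path_equiv E (compl_path V S) x y)"
  shows "irreducible (det_on K (jac E)) \<and> det_on K (jac E) dvd det_on V (H_mat E Inp out)"
proof -
  have fV: "finite V" using core by (simp add: core_network_def)
  have WV: "abs_appendage_nodes V E Inp out \<subseteq> V" by (auto simp: abs_appendage_nodes_def)
  have cs: "K \<subseteq> abs_appendage_nodes V E Inp out \<and> K \<noteq> {} \<and> (\<forall>a\<in>K. \<forall>b\<in>K. (a, b) \<in> (E \<inter> K \<times> K)\<^sup>*)"
    using comp_sc[OF a] .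
  have KV: "K \<subseteq> V" using cs WV by blast
  have fK: "finite K" using finite_subset[OF KV fV] .
  have irr: "irreducible (det_on K (jac E))"
    using det_irreducible[OF fK] cs by blast
  let ?H = "H_mat E Inp out"
  let ?t = "\<lambda>p. of_int (sign p) * (\<Prod>i\<in>V. ?H i (p i)) :: ('n \<times> 'n option) mpoly"
  let ?P = "{p. p permutes V}"
  let ?P1 = "{p. p permutes V \<and> (\<forall>i\<in>K. p i \<in> K)}"
  have nzt: "out \<notin> K \<and> (\<forall>i\<in>K. p i \<in> K)" if p: "p permutes V" and t: "?t p \<noteq> 0" for p
  proof -
    have "\<forall>i\<in>V. ?H i (p i) \<noteq> 0"
    proof (rule ccontr)
      assume "\<not> (\<forall>i\<in>V. ?H i (p i) \<noteq> 0)"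
      then have "(\<Prod>i\<in>V. ?H i (p i)) = 0" using fV by (meson prod_zero)
      then show False using t by simp
    qed
    then show ?thesis using key_perm[OF core a b p] by blast
  qed
  have split0: "det_on V ?H = sum ?t ?P1"
    unfolding det_on_def
    by (rule sum.mono_neutral_right[OF finite_permutations[OF fV]]) (use nzt in auto)
  have dvd: "det_on K (jac E) dvd det_on V ?H"
  proof (cases "out \<in> K")
    case True
    have "sum ?t ?P1 = 0" by (rule sum.neutral) (use nzt True in blast)
    then show ?thesis using split0 by simp
  next
    case False
    have "det_on V ?H = det_on K ?H * det_on (V - K) ?H"
      using split0 det_split[OF fV KV, of ?H] by simp
    moreover have "det_on K ?H = det_on K (jac E)"
      unfolding det_on_def
    proof (intro sum.cong refl arg_cong2[where f = "(*)"] prod.cong)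
      fix p i assume p: "p \<in> {p. p permutes K}" and i: "i \<in> K"
      have "p i \<in> K" using p i permutes_in_image[of p K i] by simp
      then have "p i \<noteq> out" using False by auto
      then show "?H i (p i) = jac E i (p i)" by (simp add: H_mat_def)
    qed
    ultimately show ?thesis by simp
  qed
  show ?thesis using irr dvd by blast
qed

end
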